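(* Let $g:\mathbb{R}^m\to\mathbb{R}$ be a continuous convex function and $X\subset\mathbb{R}^m$ a closed convex set, and suppose $\mathbf{X}^*=\{x\in X: g(x)\le0\}$ is non-empty. Assume there is $K\ge0$ with $\|\nabla g^+(x)\|\le K$ for all $x$. Let $\{\alpha(t)\},\{\beta(t)\}$ satisfy (a) $\alpha(t)\in[0,1]$, $\sum_{t=0}^\infty\alpha(t)=\infty$, $\sum_{t=0}^\infty\alpha^2(t)<\infty$; (b) $\beta(t)\ge0$, $\sum_{t=0}^\infty\beta(t)=\infty$, $\sum_{t=0}^\infty\beta^2(t)<\infty$. Define the iteration $$\xi(t)=x(t)-\beta(t)\nabla g^+(x(t)),\quad \varphi(t)=\alpha(t)\big(\xi(t)-P_X(\xi(t))\big),\quad x(t+1)=\xi(t)-\varphi(t).$$ Then $x(t)$ converges to a vector $x^*\in\mathbf{X}^*$.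
   Context: $g^+(x)=\max[g(x),0]$; $\nabla g^+(x)$ denotes a subgradient of $g^+$ at $x$; $P_X$ is the Euclidean projection onto $X$. *)

theory Defs
  imports "HOL-Analysis.Analysis"
begin

definition pos_part_fun :: "('a \<Rightarrow> real) \<Rightarrow> 'a \<Rightarrow> real" where
  "pos_part_fun g x = max (g x) 0"

definition is_subgradient :: "('a::real_inner \<Rightarrow> real) \<Rightarrow> 'a \<Rightarrow> 'a \<Rightarrow> bool" where
  "is_subgradient f x d \<longleftrightarrow> (\<forall>y. f y \<ge> f x + inner d (y - x))"

end

theory Submission
  imports Defs
begin

lemma rs_lemma:
  fixes a b c :: "nat \<Rightarrow> real"
  assumes a0: "\<And>t. a t \<ge> 0" and b0: "\<And>t. b t \<ge> 0" and c0: "\<And>t. c t \<ge> 0"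
    and sc: "summable c"
    and step: "\<And>t. a (Suc t) \<le> a t - b t + c t"
  shows "summable b \<and> convergent a"
proof -
  have ps: "a n + (\<Sum>t<n. b t) \<le> a 0 + (\<Sum>t<n. c t)" for n
  proof (induction n)
    case 0 then show ?case by simp
  next
    case (Suc n) then show ?case using step[of n] by simp
  qed
  have cle: "(\<Sum>t<n. c t) \<le> suminf c" for n
    using sum_le_suminf[OF sc, of "{..<n}"] c0 by auto
  have sb: "summable b"
  proof (rule summableI_nonneg_bounded[where x="a 0 + suminf c"])
    show "0 \<le> b n" for n using b0 .
    show "(\<Sum>i<n. b i) \<le> a 0 + suminf c" for n using ps[of n] cle[of n] a0[of n] by linarith
  qed
  define w where "w n = a n + (\<Sum>t<n. b t) - (\<Sum>t<n. c t)" for n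
  have "decseq w"
  proof (rule decseq_SucI)
    fix n show "w (Suc n) \<le> w n" unfolding w_def using step[of n] by simp
  qed
  moreover have "\<forall>i. - suminf c \<le> w i"
  proof
    fix i show "- suminf c \<le> w i" unfolding w_def
    proof -
      have "0 \<le> (\<Sum>t<i. b t)" using b0 by (simp add: sum_nonneg)
      then show "- suminf c \<le> a i + (\<Sum>t<i. b t) - (\<Sum>t<i. c t)"
        using cle[of i] a0[of i] by linarith
    qed
  qed
  ultimately obtain L where L: "w \<longlonglongrightarrow> L" using decseq_convergent by blast
  have "(\<lambda>n. w n - (\<Sum>t<n. b t) + (\<Sum>t<n. c t)) \<longlonglongrightarrow> L - suminf b + suminf c"
    by (intro tendsto_intros L summable_LIMSEQ sb sc)
  moreover have "(\<lambda>n. w n - (\<Sum>t<n. b t) + (\<Sum>t<n. c t)) = a" unfolding w_def by auto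
  ultimately have "convergent a" unfolding convergent_def by auto
  with sb show ?thesis by simp
qed

lemma nsq: "(norm (a - b :: 'a::real_inner))^2 = (norm a)^2 - 2 * inner a b + (norm b)^2"
  by (simp add: power2_norm_eq_inner inner_diff inner_commute algebra_simps)


theorem theorem2:
  fixes g :: "'a::euclidean_space \<Rightarrow> real"
    and X :: "'a set"
    and dg :: "'a \<Rightarrow> 'a"
    and K :: real
    and \<alpha> \<beta> :: "nat \<Rightarrow> real"
    and x \<xi> \<phi> :: "nat \<Rightarrow> 'a"
  assumes g_cont: "continuous_on UNIV g"
    and g_conv: "convex_on UNIV g"
    and X_closed: "closed X"
    and X_convex: "convex X"
    and Xstar_ne: "{y \<in> X. g y \<le> 0} \<noteq> {}"
    and K_nonneg: "K \<ge> 0"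
    and dg_subgrad: "\<And>y. is_subgradient (pos_part_fun g) y (dg y)"
    and dg_bound: "\<And>y. norm (dg y) \<le> K"
    and \<alpha>_range: "\<And>t. 0 \<le> \<alpha> t \<and> \<alpha> t \<le> 1"
    and \<alpha>_div: "\<not> summable \<alpha>"
    and \<alpha>_sq: "summable (\<lambda>t. (\<alpha> t)\<^sup>2)"
    and \<beta>_nonneg: "\<And>t. \<beta> t \<ge> 0"
    and \<beta>_div: "\<not> summable \<beta>"
    and \<beta>_sq: "summable (\<lambda>t. (\<beta> t)\<^sup>2)"
    and \<xi>_def: "\<And>t. \<xi> t = x t - \<beta> t *\<^sub>R dg (x t)"
    and \<phi>_def: "\<And>t. \<phi> t = \<alpha> t *\<^sub>R (\<xi> t - closest_point X (\<xi> t))"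
    and x_step: "\<And>t. x (Suc t) = \<xi> t - \<phi> t"
  shows "\<exists>xs. xs \<in> X \<and> g xs \<le> 0 \<and> x \<longlonglongrightarrow> xs"
proof -
  define gp where "gp = pos_part_fun g"
  define cp where "cp = closest_point X"
  define d where "d y = dist y (cp y)" for y
  define G where "G t = gp (x t)" for t
  define D where "D t = d (x t)" for t
  define E where "E t = d (\<xi> t)" for t
  have Xne: "X \<noteq> {}" using Xstar_ne by auto
  have cpX: "cp y \<in> X" for y unfolding cp_def using closest_point_in_set[OF X_closed Xne] .
  have d_le: "d y \<le> dist y p" if "p \<in> X" for y p
    unfolding d_def cp_def using closest_point_le[OF X_closed that] .
  have d_nonneg: "d y \<ge> 0" for y unfolding d_def by simp
  have d_lip: "d y \<le> d w + dist y w" for y w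
  proof -
    have "d y \<le> dist y (cp w)" using d_le cpX by blast
    also have "\<dots> \<le> dist y w + dist w (cp w)" by (rule dist_triangle)
    finally show ?thesis unfolding d_def by simp
  qed
  have gp_nonneg: "gp y \<ge> 0" for y unfolding gp_def pos_part_fun_def by simp
  have sg: "gp w \<ge> gp y + inner (dg y) (w - y)" for y w
    using dg_subgrad[of y] unfolding is_subgradient_def gp_def by blast
  have gp_lip: "gp y - gp w \<le> K * norm (y - w)" for y w
  proof -
    have "inner (dg y) (y - w) \<le> norm (dg y) * norm (y - w)" by (rule norm_cauchy_schwarz)
    also have "\<dots> \<le> K * norm (y - w)" using dg_bound[of y] by (simp add: mult_right_mono)
    finally have "inner (dg y) (y - w) \<le> K * norm (y - w)" .
    moreover have "inner (dg y) (w - y) = - inner (dg y) (y - w)"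
      by (simp add: inner_diff_right)
    ultimately show ?thesis using sg[of y w] by linarith
  qed
  have dist_xxi: "dist (x t) (\<xi> t) \<le> \<beta> t * K" for t
    using \<xi>_def[of t] dg_bound[of "x t"] \<beta>_nonneg[of t]
    by (simp add: dist_norm mult_left_mono)
  have L2: "E t \<le> D t + \<beta> t * K" for t
    using d_lip[of "\<xi> t" "x t"] dist_xxi[of t] unfolding E_def D_def by (simp add: dist_commute)
  have L2': "D t \<le> E t + \<beta> t * K" for t
    using d_lip[of "x t" "\<xi> t"] dist_xxi[of t] unfolding E_def D_def by simp
  have xs_eq: "x (Suc t) - cp (\<xi> t) = (1 - \<alpha> t) *\<^sub>R (\<xi> t - cp (\<xi> t))" for t
    using x_step[of t] \<phi>_def[of t] unfolding cp_def by (simp add: algebra_simps)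
  have L3: "D (Suc t) \<le> (1 - \<alpha> t) * E t" for t
  proof -
    have "D (Suc t) \<le> dist (x (Suc t)) (cp (\<xi> t))" unfolding D_def using d_le cpX by blast
    also have "\<dots> = (1 - \<alpha> t) * E t" unfolding E_def d_def dist_norm xs_eq
      using \<alpha>_range[of t] by simp
    finally show ?thesis .
  qed
  have L4: "norm (x (Suc t) - x t) \<le> \<beta> t * K + \<alpha> t * E t" for t
  proof -
    have e1: "x (Suc t) - x t = (\<xi> t - x t) - \<alpha> t *\<^sub>R (\<xi> t - cp (\<xi> t))"
      using x_step[of t] \<phi>_def[of t] unfolding cp_def by (simp add: algebra_simps)
    have e2: "\<xi> t - x t = - (\<beta> t *\<^sub>R dg (x t))" using \<xi>_def[of t] by simp
    have "x (Suc t) - x t = - (\<beta> t *\<^sub>R dg (x t)) - \<alpha> t *\<^sub>R (\<xi> t - cp (\<xi> t))"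
      using e1 e2 by simp
    also have "norm \<dots> \<le> norm (\<beta> t *\<^sub>R dg (x t)) + norm (\<alpha> t *\<^sub>R (\<xi> t - cp (\<xi> t)))"
      by (rule norm_triangle_ineq4[THEN order_trans]) simp
    also have "\<dots> \<le> \<beta> t * K + \<alpha> t * E t"
      using dg_bound[of "x t"] \<beta>_nonneg[of t] \<alpha>_range[of t]
      unfolding E_def d_def dist_norm by (simp add: mult_left_mono)
    finally show ?thesis .
  qed
  have fejer_step: "(norm (x (Suc t) - z))^2 \<le> (norm (x t - z))^2 - (2 * \<beta> t * G t + \<alpha> t * (E t)^2) + (\<beta> t)^2 * K^2"
    if z: "z \<in> X" "g z \<le> 0" for z t
  proof -
    let ?u = "x t - z" and ?v = "dg (x t)" and ?p = "cp (\<xi> t)"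
    have gpz: "gp z = 0" unfolding gp_def pos_part_fun_def using z by simp
    have iv: "inner ?v ?u \<ge> G t"
    proof -
      have "0 \<ge> G t + inner ?v (z - x t)" using sg[of "x t" z] gpz unfolding G_def by simp
      moreover have "inner ?v (z - x t) = - inner ?v ?u" by (simp add: inner_diff_right)
      ultimately show ?thesis by linarith
    qed
    have eqxz: "\<xi> t - z = ?u - \<beta> t *\<^sub>R ?v" using \<xi>_def[of t] by (simp add: algebra_simps)
    have "(norm (\<xi> t - z))^2 = (norm ?u)^2 - 2 * \<beta> t * inner ?u ?v + (\<beta> t)^2 * (norm ?v)^2"
      unfolding eqxz nsq[of ?u "\<beta> t *\<^sub>R ?v"] using \<beta>_nonneg[of t] by (simp add: power_mult_distrib)
    also have "\<dots> \<le> (norm ?u)^2 - 2 * \<beta> t * G t + (\<beta> t)^2 * K^2"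
    proof -
      have "(\<beta> t)^2 * (norm ?v)^2 \<le> (\<beta> t)^2 * K^2"
        using dg_bound[of "x t"] by (intro mult_left_mono power_mono) auto
      moreover have "2 * \<beta> t * G t \<le> 2 * \<beta> t * inner ?u ?v"
        using iv \<beta>_nonneg[of t] by (simp add: inner_commute mult_left_mono)
      ultimately show ?thesis by linarith
    qed
    finally have A: "(norm (\<xi> t - z))^2 \<le> (norm ?u)^2 - 2 * \<beta> t * G t + (\<beta> t)^2 * K^2" .
    have ip: "inner (\<xi> t - ?p) (z - ?p) \<le> 0"
      unfolding cp_def by (rule closest_point_dot[OF X_convex X_closed z(1)])
    have nE: "norm (\<xi> t - ?p) = E t" unfolding E_def d_def dist_norm ..
    have eqx2: "x (Suc t) - z = (\<xi> t - z) - \<alpha> t *\<^sub>R (\<xi> t - ?p)"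
      using x_step[of t] \<phi>_def[of t] unfolding cp_def by (simp add: algebra_simps)
    have "(norm (x (Suc t) - z))^2 = (norm (\<xi> t - z))^2 - 2 * \<alpha> t * inner (\<xi> t - z) (\<xi> t - ?p) + (\<alpha> t)^2 * (E t)^2"
      unfolding eqx2 nsq[of "\<xi> t - z" "\<alpha> t *\<^sub>R (\<xi> t - ?p)"] using nE by (simp add: power_mult_distrib)
    also have "\<dots> \<le> (norm (\<xi> t - z))^2 - \<alpha> t * (E t)^2"
    proof -
      have "inner (\<xi> t - z) (\<xi> t - ?p) = inner ((\<xi> t - ?p) - (z - ?p)) (\<xi> t - ?p)" by simp
      also have "\<dots> = (norm (\<xi> t - ?p))^2 - inner (z - ?p) (\<xi> t - ?p)"
        by (simp only: inner_diff_left power2_norm_eq_inner)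
      finally have "inner (\<xi> t - z) (\<xi> t - ?p) = (E t)^2 - inner (z - ?p) (\<xi> t - ?p)"
        using nE by simp
      hence ge: "inner (\<xi> t - z) (\<xi> t - ?p) \<ge> (E t)^2" using ip by (simp add: inner_commute)
      have a0: "0 \<le> \<alpha> t" "\<alpha> t \<le> 1" using \<alpha>_range[of t] by auto
      have "2 * \<alpha> t * (E t)^2 \<le> 2 * \<alpha> t * inner (\<xi> t - z) (\<xi> t - ?p)"
        using ge a0 by (simp add: mult_left_mono)
      moreover have "(\<alpha> t)^2 * (E t)^2 \<le> \<alpha> t * (E t)^2"
        using a0 by (simp add: power2_eq_square mult_right_mono mult_left_le_one_le)
      ultimately show ?thesis by linarith
    qed
    finally show ?thesis using A by linarith
  qed
  have fejer: "summable (\<lambda>t. \<beta> t * G t) \<and> summable (\<lambda>t. \<alpha> t * (E t)^2) \<and> convergent (\<lambda>t. norm (x t - z))"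
    if z: "z \<in> X" "g z \<le> 0" for z
  proof -
    have rs: "summable (\<lambda>t. 2 * \<beta> t * G t + \<alpha> t * (E t)^2) \<and> convergent (\<lambda>t. (norm (x t - z))^2)"
    proof (rule rs_lemma)
      show "0 \<le> (norm (x t - z))^2" for t by simp
      show "0 \<le> 2 * \<beta> t * G t + \<alpha> t * (E t)^2" for t
        using \<beta>_nonneg[of t] \<alpha>_range[of t] gp_nonneg[of "x t"] unfolding G_def by simp
      show "0 \<le> (\<beta> t)^2 * K^2" for t by simp
      show "summable (\<lambda>t. (\<beta> t)^2 * K^2)" using \<beta>_sq by (rule summable_mult2)
      show "(norm (x (Suc t) - z))^2 \<le> (norm (x t - z))^2 - (2 * \<beta> t * G t + \<alpha> t * (E t)^2) + (\<beta> t)^2 * K^2" for t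
        by (rule fejer_step[OF z])
    qed
    have s1: "summable (\<lambda>t. \<beta> t * G t)"
    proof (rule summable_comparison_test'[where N=0])
      show "summable (\<lambda>t. 2 * \<beta> t * G t + \<alpha> t * (E t)^2)" using rs by simp
      show "norm (\<beta> t * G t) \<le> 2 * \<beta> t * G t + \<alpha> t * (E t)^2" for t
        using \<beta>_nonneg[of t] \<alpha>_range[of t] gp_nonneg[of "x t"] unfolding G_def by simp
    qed
    have s2: "summable (\<lambda>t. \<alpha> t * (E t)^2)"
    proof (rule summable_comparison_test'[where N=0])
      show "summable (\<lambda>t. 2 * \<beta> t * G t + \<alpha> t * (E t)^2)" using rs by simp
      show "norm (\<alpha> t * (E t)^2) \<le> 2 * \<beta> t * G t + \<alpha> t * (E t)^2" for t
        using \<beta>_nonneg[of t] \<alpha>_range[of t] gp_nonneg[of "x t"] unfolding G_def by simp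
    qed
    from rs obtain L where L: "(\<lambda>t. (norm (x t - z))^2) \<longlonglongrightarrow> L" unfolding convergent_def by blast
    have "(\<lambda>t. sqrt ((norm (x t - z))^2)) \<longlonglongrightarrow> sqrt L" using L by (rule tendsto_real_sqrt)
    hence "convergent (\<lambda>t. norm (x t - z))" unfolding convergent_def by auto
    with s1 s2 show ?thesis by simp
  qed
  obtain z0 where z0: "z0 \<in> X" "g z0 \<le> 0" using Xstar_ne by auto
  note F0 = fejer[OF z0]
  have sumBG: "summable (\<lambda>t. \<beta> t * G t)" and sumAE: "summable (\<lambda>t. \<alpha> t * (E t)^2)"
    using F0 by auto
  have bnd: "bounded (range x)"
  proof -
    have "convergent (\<lambda>t. norm (x t - z0))" using F0 by simp
    hence "Bseq (\<lambda>t. norm (x t - z0))" by (rule convergent_imp_Bseq)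
    then obtain M where M: "\<And>t. norm (norm (x t - z0)) \<le> M" unfolding Bseq_def by auto
    have "range x \<subseteq> cball z0 M" using M by (auto simp: dist_norm norm_minus_commute)
    thus ?thesis using bounded_cball bounded_subset by blast
  qed
  have \<beta>_lim: "\<beta> \<longlonglongrightarrow> 0"
  proof -
    have "(\<lambda>t. sqrt ((\<beta> t)^2)) \<longlonglongrightarrow> sqrt 0"
      by (rule tendsto_real_sqrt[OF summable_LIMSEQ_zero[OF \<beta>_sq]])
    thus ?thesis using \<beta>_nonneg by simp
  qed
  have claim: "\<exists>t\<ge>T. G t < \<eta> \<and> D t < \<eta>" if \<eta>pos: "\<eta> > 0" for \<eta> T
  proof (rule ccontr)
    assume "\<not> ?thesis"
    hence H: "\<And>t. t \<ge> T \<Longrightarrow> G t \<ge> \<eta> \<or> D t \<ge> \<eta>" by force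
    define \<epsilon> where "\<epsilon> = \<eta> / 3"
    define \<delta> where "\<delta> = min \<eta> (\<epsilon> / (K + 1))"
    have \<epsilon>pos: "\<epsilon> > 0" unfolding \<epsilon>_def using \<eta>pos by simp
    have \<delta>pos: "\<delta> > 0" unfolding \<delta>_def using \<eta>pos \<epsilon>pos K_nonneg by simp
    have \<delta>le: "\<delta> \<le> \<eta>" unfolding \<delta>_def by simp
    have K\<delta>: "K * \<delta> < \<epsilon>"
    proof -
      have "\<delta> \<le> \<epsilon> / (K + 1)" unfolding \<delta>_def by simp
      hence "K * \<delta> \<le> K * (\<epsilon> / (K + 1))" using K_nonneg by (rule mult_left_mono)
      also have "\<dots> < \<epsilon>" using K_nonneg \<epsilon>pos by (simp add: field_simps)
      finally show ?thesis .
    qed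
    have "eventually (\<lambda>t. \<beta> t < \<delta> / (2 * (K + 1))) sequentially"
      using order_tendstoD(2)[OF \<beta>_lim] \<delta>pos K_nonneg by simp
    then obtain T1 where T1: "\<And>t. t \<ge> T1 \<Longrightarrow> \<beta> t < \<delta> / (2 * (K + 1))"
      unfolding eventually_sequentially by blast
    have \<beta>K: "\<beta> t * K \<le> \<delta> / 2" if "t \<ge> T1" for t
    proof -
      have "\<beta> t * K \<le> \<beta> t * (K + 1)" using \<beta>_nonneg[of t] by (simp add: mult_left_mono)
      also have "\<dots> \<le> \<delta> / (2 * (K + 1)) * (K + 1)"
        using T1[OF that] K_nonneg by (intro mult_right_mono) auto
      also have "\<dots> = \<delta> / 2" using K_nonneg by (simp add: field_simps)
      finally show ?thesis .
    qed
    define fA where "fA t = (if G t \<ge> \<epsilon> then \<beta> t else 0)" for t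
    have fA_nonneg: "fA t \<ge> 0" for t unfolding fA_def using \<beta>_nonneg[of t] by simp
    have SA: "summable fA"
    proof (rule summable_comparison_test'[where N=0])
      show "summable (\<lambda>t. \<beta> t * G t / \<epsilon>)" using sumBG by (rule summable_divide)
      show "norm (fA t) \<le> \<beta> t * G t / \<epsilon>" for t
      proof (cases "G t \<ge> \<epsilon>")
        case True
        have "\<beta> t * \<epsilon> \<le> \<beta> t * G t" using True \<beta>_nonneg[of t] by (simp add: mult_left_mono)
        thus ?thesis unfolding fA_def using True \<beta>_nonneg[of t] \<epsilon>pos by (simp add: field_simps)
      next
        case False
        thus ?thesis unfolding fA_def using \<beta>_nonneg[of t] \<epsilon>pos gp_nonneg[of "x t"]
          unfolding G_def by simp
      qed
    qed
    define fB where "fB t = (if D t \<ge> \<delta> \<and> t \<ge> T1 then \<alpha> t else 0)" for t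
    have SB: "summable fB"
    proof (rule summable_comparison_test'[where N=0])
      show "summable (\<lambda>t. \<alpha> t * (E t)^2 * (4 / \<delta>^2))" using sumAE by (rule summable_mult2)
      show "norm (fB t) \<le> \<alpha> t * (E t)^2 * (4 / \<delta>^2)" for t
      proof (cases "D t \<ge> \<delta> \<and> t \<ge> T1")
        case True
        have "E t \<ge> \<delta> / 2" using L2'[of t] \<beta>K[of t] True by linarith
        hence "(\<delta> / 2)^2 \<le> (E t)^2" using \<delta>pos by (intro power_mono) auto
        hence "\<delta>^2 \<le> 4 * (E t)^2" by (simp add: power_divide)
        hence "\<alpha> t * \<delta>^2 \<le> \<alpha> t * (4 * (E t)^2)" using \<alpha>_range[of t] by (simp add: mult_left_mono)
        thus ?thesis unfolding fB_def using True \<alpha>_range[of t] \<delta>pos by (simp add: field_simps)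
      next
        case False
        hence "fB t = 0" unfolding fB_def by auto
        thus ?thesis using \<alpha>_range[of t] \<delta>pos by simp
      qed
    qed
    have freqD: "\<exists>s\<ge>S. D s < \<delta>" for S
    proof (rule ccontr)
      assume "\<not> ?thesis"
      hence "\<And>t. t \<ge> S \<Longrightarrow> D t \<ge> \<delta>" by force
      hence "eventually (\<lambda>t. \<alpha> t = fB t) sequentially"
        unfolding eventually_sequentially fB_def by (intro exI[of _ "max S T1"]) auto
      hence "summable \<alpha>" using SB summable_cong by blast
      with \<alpha>_div show False by simp
    qed
    have freqG: "\<exists>u\<ge>S. G u < \<epsilon>" for S
    proof (rule ccontr)
      assume "\<not> ?thesis"
      hence "\<And>t. t \<ge> S \<Longrightarrow> G t \<ge> \<epsilon>" by force
      hence "eventually (\<lambda>t. \<beta> t = fA t) sequentially"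
        unfolding eventually_sequentially fA_def by (intro exI[of _ S]) auto
      hence "summable \<beta>" using SA summable_cong by blast
      with \<beta>_div show False by simp
    qed
    define \<tau> where "\<tau> = \<epsilon> / (2 * K^2 + 1)"
    have \<tau>pos: "\<tau> > 0" unfolding \<tau>_def using \<epsilon>pos by (simp add: add_nonneg_pos)
    have K\<tau>: "2 * K^2 * \<tau> < \<epsilon>"
    proof -
      have p: "0 < 2 * K^2 + 1" by (simp add: add_nonneg_pos)
      have "2 * K^2 * \<tau> * (2 * K^2 + 1) = 2 * K^2 * \<epsilon>" unfolding \<tau>_def using p by simp
      also have "\<dots> < \<epsilon> * (2 * K^2 + 1)" using \<epsilon>pos by (simp add: algebra_simps)
      finally show ?thesis using p by (simp add: mult_less_cancel_right)
    qed
    obtain N0 where N0: "\<And>n. n \<ge> N0 \<Longrightarrow> norm (\<Sum>i. fA (i + n)) < \<tau>"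
      using suminf_exist_split[OF \<tau>pos SA] by blast
    obtain s where s: "s \<ge> max (max T T1) N0" "D s < \<delta>" using freqD by blast
    have Gs: "G s \<ge> 3 * \<epsilon>" using H[of s] s \<delta>le unfolding \<epsilon>_def by auto
    obtain u0 where u0: "u0 \<ge> s" "G u0 < \<epsilon>" using freqG by blast
    define u where "u = (LEAST u. u \<ge> s \<and> G u < \<epsilon>)"
    have u: "u \<ge> s" "G u < \<epsilon>" unfolding u_def using LeastI[of "\<lambda>u. u \<ge> s \<and> G u < \<epsilon>" u0] u0 by auto
    have inA: "G t \<ge> \<epsilon>" if "s \<le> t" "t < u" for t
      using not_less_Least[of t "\<lambda>u. u \<ge> s \<and> G u < \<epsilon>"] that unfolding u_def[symmetric] by auto
    have S\<beta>: "(\<Sum>t\<in>{s..<u}. \<beta> t) \<le> \<tau>"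
    proof -
      have "(\<Sum>t\<in>{s..<u}. \<beta> t) = (\<Sum>t\<in>{s..<u}. fA t)"
        by (rule sum.cong) (auto simp: fA_def inA)
      also have "\<dots> = (\<Sum>i\<in>{0..<u-s}. fA (i + s))"
        using sum.shift_bounds_nat_ivl[of fA 0 s "u - s"] u(1) by simp
      also have "\<dots> \<le> (\<Sum>i. fA (i + s))"
        by (rule sum_le_suminf) (auto simp: fA_nonneg summable_iff_shift SA)
      also have "\<dots> \<le> \<tau>" using N0[of s] s(1) by simp
      finally show ?thesis .
    qed
    have S\<alpha>: "(\<Sum>t\<in>{s..<u}. \<alpha> t * E t) \<le> D s - D u + K * (\<Sum>t\<in>{s..<u}. \<beta> t)"
    proof -
      have "(\<Sum>t\<in>{s..<u}. \<alpha> t * E t) \<le> (\<Sum>t\<in>{s..<u}. (D t - D (Suc t)) + \<beta> t * K)"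
      proof (rule sum_mono)
        fix t show "\<alpha> t * E t \<le> (D t - D (Suc t)) + \<beta> t * K"
          using L2[of t] L3[of t] by (simp add: algebra_simps)
      qed
      also have "\<dots> = (\<Sum>t\<in>{s..<u}. D t - D (Suc t)) + K * (\<Sum>t\<in>{s..<u}. \<beta> t)"
        by (simp add: sum.distrib sum_distrib_left mult.commute)
      also have "(\<Sum>t\<in>{s..<u}. D t - D (Suc t)) = D s - D u"
        using sum_Suc_diff'[OF u(1), of D] unfolding sum_subtractf by linarith
      finally show ?thesis .
    qed
    have SG: "G s - G u \<le> K * (K * (\<Sum>t\<in>{s..<u}. \<beta> t) + (\<Sum>t\<in>{s..<u}. \<alpha> t * E t))"
    proof -
      have "G s - G u = (\<Sum>t\<in>{s..<u}. G t - G (Suc t))"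
        using sum_Suc_diff'[OF u(1), of G] unfolding sum_subtractf by linarith
      also have "\<dots> \<le> (\<Sum>t\<in>{s..<u}. K * (\<beta> t * K + \<alpha> t * E t))"
      proof (rule sum_mono)
        fix t
        have "G t - G (Suc t) \<le> K * norm (x t - x (Suc t))" unfolding G_def by (rule gp_lip)
        also have "\<dots> \<le> K * (\<beta> t * K + \<alpha> t * E t)"
          using L4[of t] K_nonneg by (simp add: norm_minus_commute mult_left_mono)
        finally show "G t - G (Suc t) \<le> K * (\<beta> t * K + \<alpha> t * E t)" .
      qed
      also have "\<dots> = K * (K * (\<Sum>t\<in>{s..<u}. \<beta> t) + (\<Sum>t\<in>{s..<u}. \<alpha> t * E t))"
        by (simp add: sum.distrib sum_distrib_left algebra_simps)
      finally show ?thesis .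
    qed
    have Du: "D u \<ge> 0" unfolding D_def using d_nonneg .
    have "K * (K * (\<Sum>t\<in>{s..<u}. \<beta> t) + (\<Sum>t\<in>{s..<u}. \<alpha> t * E t))
        \<le> K * (K * \<tau> + (\<delta> + K * \<tau>))"
    proof (rule mult_left_mono[OF _ K_nonneg])
      have "K * (\<Sum>t\<in>{s..<u}. \<beta> t) \<le> K * \<tau>" using S\<beta> K_nonneg by (simp add: mult_left_mono)
      thus "K * (\<Sum>t\<in>{s..<u}. \<beta> t) + (\<Sum>t\<in>{s..<u}. \<alpha> t * E t) \<le> K * \<tau> + (\<delta> + K * \<tau>)"
        using S\<alpha> Du s(2) by linarith
    qed
    also have "\<dots> = 2 * K^2 * \<tau> + K * \<delta>" by (simp add: algebra_simps power2_eq_square)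
    finally have "G s - G u < 2 * \<epsilon>" using SG K\<tau> K\<delta> by linarith
    with Gs u(2) show False by linarith
  qed
  have "\<exists>r. \<forall>n. (G (r n) < inverse (real (Suc n)) \<and> D (r n) < inverse (real (Suc n))) \<and> r n < r (Suc n)"
  proof (rule dependent_nat_choice)
    show "\<exists>t. G t < inverse (real (Suc 0)) \<and> D t < inverse (real (Suc 0))"
      using claim[of "inverse (real (Suc 0))" 0] by auto
    fix t n
    show "\<exists>t'. (G t' < inverse (real (Suc (Suc n))) \<and> D t' < inverse (real (Suc (Suc n)))) \<and> t < t'"
      using claim[of "inverse (real (Suc (Suc n)))" "Suc t"] by auto
  qed
  then obtain r where r: "\<And>n. G (r n) < inverse (real (Suc n))" "\<And>n. D (r n) < inverse (real (Suc n))"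
    and rmono: "strict_mono r" unfolding strict_mono_Suc_iff by blast
  have "bounded (range (x \<circ> r))" using bnd by (rule bounded_subset) auto
  then obtain l r2 where r2: "strict_mono r2" and lim: "(x \<circ> r \<circ> r2) \<longlonglongrightarrow> l"
    using bounded_imp_convergent_subsequence by (metis comp_assoc)
  define q where "q = r \<circ> r2"
  have qmono: "strict_mono q" unfolding q_def using rmono r2 by (rule strict_mono_o)
  have limq: "(\<lambda>n. x (q n)) \<longlonglongrightarrow> l" using lim unfolding q_def by (simp add: comp_def)
  have small: "\<And>n. inverse (real (Suc (r2 n))) \<le> inverse (real (Suc n))"
    using seq_suble[OF r2] by (simp add: le_imp_inverse_le)
  have Gq0: "(\<lambda>n. G (q n)) \<longlonglongrightarrow> 0"
  proof (rule tendsto_sandwich[OF _ _ tendsto_const LIMSEQ_inverse_real_of_nat])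
    show "\<forall>\<^sub>F n in sequentially. 0 \<le> G (q n)" unfolding G_def using gp_nonneg by simp
    show "\<forall>\<^sub>F n in sequentially. G (q n) \<le> inverse (real (Suc n))"
    proof (rule always_eventually, rule allI)
      fix n show "G (q n) \<le> inverse (real (Suc n))"
        using r(1)[of "r2 n"] small[of n] unfolding q_def comp_def by linarith
    qed
  qed
  have Dq0: "(\<lambda>n. D (q n)) \<longlonglongrightarrow> 0"
  proof (rule tendsto_sandwich[OF _ _ tendsto_const LIMSEQ_inverse_real_of_nat])
    show "\<forall>\<^sub>F n in sequentially. 0 \<le> D (q n)" unfolding D_def using d_nonneg by simp
    show "\<forall>\<^sub>F n in sequentially. D (q n) \<le> inverse (real (Suc n))"
    proof (rule always_eventually, rule allI)
      fix n show "D (q n) \<le> inverse (real (Suc n))"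
        using r(2)[of "r2 n"] small[of n] unfolding q_def comp_def by linarith
    qed
  qed
  have "isCont g l" using g_cont by (simp add: continuous_on_eq_continuous_at)
  hence "(\<lambda>n. g (x (q n))) \<longlonglongrightarrow> g l" using limq by (rule isCont_tendsto_compose)
  hence "(\<lambda>n. max (g (x (q n))) 0) \<longlonglongrightarrow> max (g l) 0" by (intro tendsto_intros)
  hence "(\<lambda>n. G (q n)) \<longlonglongrightarrow> max (g l) 0" unfolding G_def gp_def pos_part_fun_def .
  hence "max (g l) 0 = 0" using Gq0 LIMSEQ_unique by blast
  hence gl: "g l \<le> 0" by simp
  have "isCont cp l" unfolding cp_def
    using continuous_on_closest_point[OF X_convex X_closed Xne, of UNIV]
    by (simp add: continuous_on_eq_continuous_at)
  hence "(\<lambda>n. cp (x (q n))) \<longlonglongrightarrow> cp l" using limq by (rule isCont_tendsto_compose)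
  hence "(\<lambda>n. dist (x (q n)) (cp (x (q n)))) \<longlonglongrightarrow> dist l (cp l)" using limq by (intro tendsto_intros)
  hence "(\<lambda>n. D (q n)) \<longlonglongrightarrow> d l" unfolding D_def d_def .
  hence "d l = 0" using Dq0 LIMSEQ_unique by blast
  hence "l = cp l" unfolding d_def by simp
  hence lX: "l \<in> X" using cpX[of l] by simp
  have "convergent (\<lambda>t. norm (x t - l))" using fejer[OF lX gl] by simp
  then obtain L where L: "(\<lambda>t. norm (x t - l)) \<longlonglongrightarrow> L" unfolding convergent_def by blast
  have "((\<lambda>t. norm (x t - l)) \<circ> q) \<longlonglongrightarrow> L" using L qmono by (rule LIMSEQ_subseq_LIMSEQ)
  moreover have "((\<lambda>t. norm (x t - l)) \<circ> q) \<longlonglongrightarrow> norm (l - l)"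
    unfolding comp_def using limq by (intro tendsto_intros)
  ultimately have "L = 0" using LIMSEQ_unique by fastforce
  with L have "(\<lambda>t. x t - l) \<longlonglongrightarrow> 0" using tendsto_norm_zero_iff by blast
  hence "x \<longlonglongrightarrow> l" using LIM_zero_iff by blast
  with lX gl show ?thesis by blast
qed

end
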